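(* Let $\mathbb{T}$ be a time scale and $\alpha\in(0,1]$. Let $f:\mathbb{R}\to\mathbb{R}$ be continuously differentiable and let $g:\mathbb{T}\to\mathbb{R}$ be continuous on $\mathbb{T}^k$. If $g$ is nabla fractional differentiable of order $\alpha$ at $t\in\mathbb{T}^k$, then $f\circ g:\mathbb{T}\to\mathbb{R}$ is nabla fractional differentiable of order $\alpha$ at $t$ and $$\nabla^{(\alpha)}(f\circ g)(t)=\int_0^1 f'\big(g(\rho(t))+\varphi\,(\nu(t))^{\alpha}\,\nabla^{(\alpha)}g(t)\big)\,d\varphi\cdot\nabla^{(\alpha)}g(t).$$
   Context: A time scale $\mathbb{T}$ is a nonempty closed subset of $\mathbb{R}$ with the relative topology. For $t\in\mathbb{T}$: $\rho(t)=\sup\{s\in\mathbb{T}:s<t\}$, $\sigma(t)=\inf\{s\in\mathbb{T}:s>t\}$, $\nu(t)=t-\rho(t)$. If $\mathbb{T}$ has a minimum $m$ with $\sigma(m)>m$ then $\mathbb{T}^k=\mathbb{T}\setminus\{m\}$, else $\mathbb{T}^k=\mathbb{T}$. $U_\delta(t)=(t-\delta,t+\delta)\cap\mathbb{T}$, $U^-_\delta(t)=(t-\delta,t)\cap\mathbb{T}$. Let $Q=\{1/q: q \text{ an odd positive integer}\}$; for $\alpha\in Q$, $x^\alpha$ is the real $q$-th root. Definition: $h:\mathbb{T}\to\mathbb{R}$ is nabla fractional differentiable of order $\alpha$ at $t\in\mathbb{T}^k$ if there is $L\in\mathbb{R}$ such that for every $\varepsilon>0$ there is $\delta>0$ with $|[h(\rho(t))-h(s)]-L[\rho(t)-s]^\alpha|\le\varepsilon|\rho(t)-s|^\alpha$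 for all $s\in U_\delta(t)$ if $\alpha\in Q$, resp. all $s\in U^-_\delta(t)$ if $\alpha\notin Q$; then $\nabla^{(\alpha)}h(t):=L$. *)

theory Defs
  imports "HOL-Analysis.Analysis"
begin

definition time_scale :: "real set \<Rightarrow> bool" where
  "time_scale T \<longleftrightarrow> T \<noteq> {} \<and> closed T"

text \<open>Backward jump; with the standard convention sup of the empty set = inf T = t.\<close>
definition ts_rho :: "real set \<Rightarrow> real \<Rightarrow> real" where
  "ts_rho T t = (if {s\<in>T. s < t} = {} then t else Sup {s\<in>T. s < t})"

text \<open>Forward jump; with the standard convention inf of the empty set = sup T = t.\<close>
definition ts_sigma :: "real set \<Rightarrow> real \<Rightarrow> real" where
  "ts_sigma T t = (if {s\<in>T. s > t} = {} then t else Inf {s\<in>T. s > t})"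

definition ts_nu :: "real set \<Rightarrow> real \<Rightarrow> real" where
  "ts_nu T t = t - ts_rho T t"

definition ts_Tk :: "real set \<Rightarrow> real set" where
  "ts_Tk T = (if \<exists>m\<in>T. (\<forall>s\<in>T. m \<le> s) \<and> ts_sigma T m > m
              then T - {THE m. m \<in> T \<and> (\<forall>s\<in>T. m \<le> s)} else T)"

definition U_nbhd :: "real set \<Rightarrow> real \<Rightarrow> real \<Rightarrow> real set" where
  "U_nbhd T \<delta> t = {t - \<delta> <..< t + \<delta>} \<inter> T"

definition U_left :: "real set \<Rightarrow> real \<Rightarrow> real \<Rightarrow> real set" where
  "U_left T \<delta> t = {t - \<delta> <..< t} \<inter> T"

definition Qodd :: "real set" where
  "Qodd = {1 / real q | q. odd q \<and> q > 0}"

definition frpow :: "real \<Rightarrow> real \<Rightarrow> real" where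
  "frpow \<alpha> x = (if \<alpha> \<in> Qodd
      then root (SOME q. odd q \<and> q > 0 \<and> \<alpha> = 1 / real q) x
      else x powr \<alpha>)"

definition nabla_frac_has_deriv ::
  "real set \<Rightarrow> real \<Rightarrow> (real \<Rightarrow> real) \<Rightarrow> real \<Rightarrow> real \<Rightarrow> bool" where
  "nabla_frac_has_deriv T \<alpha> h t L \<longleftrightarrow> t \<in> ts_Tk T \<and>
     (\<forall>\<epsilon>>0. \<exists>\<delta>>0. \<forall>s \<in> (if \<alpha> \<in> Qodd then U_nbhd T \<delta> t else U_left T \<delta> t).
        \<bar>(h (ts_rho T t) - h s) - L * frpow \<alpha> (ts_rho T t - s)\<bar>
          \<le> \<epsilon> * \<bar>ts_rho T t - s\<bar> powr \<alpha>)"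

definition nabla_frac_differentiable ::
  "real set \<Rightarrow> real \<Rightarrow> (real \<Rightarrow> real) \<Rightarrow> real \<Rightarrow> bool" where
  "nabla_frac_differentiable T \<alpha> h t \<longleftrightarrow> (\<exists>L. nabla_frac_has_deriv T \<alpha> h t L)"

end

theory Submission
  imports Defs
begin

lemma frpow_Q:
  assumes "\<alpha> \<in> Qodd"
  shows "\<exists>q. odd q \<and> q > 0 \<and> \<alpha> = 1 / real q \<and> (\<forall>x. frpow \<alpha> x = root q x)"
proof -
  have ex: "\<exists>q. odd q \<and> q > 0 \<and> \<alpha> = 1 / real q" using assms by (auto simp: Qodd_def)
  define q where "q = (SOME q. odd q \<and> q > 0 \<and> \<alpha> = 1 / real q)"
  have "odd q \<and> q > 0 \<and> \<alpha> = 1 / real q" unfolding q_def by (rule someI_ex[OF ex])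
  moreover have "\<forall>x. frpow \<alpha> x = root q x" using assms by (simp add: frpow_def q_def)
  ultimately show ?thesis by blast
qed

lemma frpow_zero: "frpow \<alpha> 0 = 0" by (simp add: frpow_def)

lemma frpow_neg: "\<alpha> \<in> Qodd \<Longrightarrow> frpow \<alpha> (- x) = - frpow \<alpha> x"
  using frpow_Q real_root_minus by metis

lemma frpow_abs:
  assumes "\<alpha> \<in> Qodd \<or> 0 \<le> x"
  shows "\<bar>frpow \<alpha> x\<bar> = \<bar>x\<bar> powr \<alpha>"
proof (cases "\<alpha> \<in> Qodd")
  case True
  then obtain q where q: "odd q" "q > 0" "\<alpha> = 1 / real q" "\<forall>x. frpow \<alpha> x = root q x"
    using frpow_Q by blast
  have "\<bar>frpow \<alpha> x\<bar> = root q \<bar>x\<bar>" using q real_root_abs by simp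
  also have "\<dots> = \<bar>x\<bar> powr \<alpha>"
    using q root_powr_inverse[of q "\<bar>x\<bar>"] by simp
  finally show ?thesis .
next
  case False
  then show ?thesis using assms by (simp add: frpow_def)
qed

lemma integral_lemma:
  fixes f f' :: "real \<Rightarrow> real"
  assumes "\<And>x. (f has_real_derivative f' x) (at x)"
  shows "integral {0..1} (\<lambda>\<phi>. f' (a + \<phi> * c)) = (if c = 0 then f' a else (f (a + c) - f a) / c)"
proof (cases "c = 0")
  case True then show ?thesis by simp
next
  case False
  have d: "((\<lambda>\<phi>. f (a + \<phi> * c) / c) has_real_derivative f' (a + \<phi> * c)) (at \<phi>)" for \<phi>
  proof -
    have "((\<lambda>\<phi>. f (a + \<phi> * c)) has_real_derivative f' (a + \<phi> * c) * c) (at \<phi>)"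
      by (rule DERIV_chain2[OF assms]) (auto intro!: derivative_eq_intros)
    from DERIV_cdivide[OF this, of c] show ?thesis using False by simp
  qed
  have "((\<lambda>\<phi>. f' (a + \<phi> * c)) has_integral (f (a + 1 * c) / c - f (a + 0 * c) / c)) {0..1}"
    by (rule fundamental_theorem_of_calculus)
       (auto intro!: has_field_derivative_at_within[OF d] simp: has_real_derivative_iff_has_vector_derivative[symmetric])
  then show ?thesis using False by (simp add: integral_unique diff_divide_distrib)
qed

lemma le0_lemma: "(\<And>e. e > 0 \<Longrightarrow> (x::real) \<le> e * K) \<Longrightarrow> K \<ge> 0 \<Longrightarrow> x \<le> 0"
proof (rule ccontr)
  assume h: "\<And>e. e > 0 \<Longrightarrow> (x::real) \<le> e * K" "K \<ge> 0" "\<not> x \<le> 0"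
  have "x \<le> (x / (2*(K+1))) * K" using h(1)[of "x / (2*(K+1))"] h(2,3) by simp
  have xp: "x > 0" using h(3) by simp
  have "0 \<le> K * x" using h(2) xp by simp
  then have "0 < K * x + x * 2" using xp by linarith
  then have "(x / (2*(K+1))) * K < x" using h(2) by (simp add: field_simps)
  with \<open>x \<le> (x / (2*(K+1))) * K\<close> show False by linarith
qed

theorem mainTheorem6:
  fixes T :: "real set" and \<alpha> t Lg :: real
    and f f' g :: "real \<Rightarrow> real"
  assumes "time_scale T"
    and "0 < \<alpha>" and "\<alpha> \<le> 1"
    and "\<And>x. (f has_real_derivative f' x) (at x)"
    and "continuous_on UNIV f'"
    and "\<forall>x\<in>ts_Tk T. continuous (at x within T) g"
    and "t \<in> ts_Tk T"
    and "nabla_frac_has_deriv T \<alpha> g t Lg"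
  shows "nabla_frac_differentiable T \<alpha> (f \<circ> g) t \<and>
         nabla_frac_has_deriv T \<alpha> (f \<circ> g) t
           (integral {0..1} (\<lambda>\<phi>. f' (g (ts_rho T t) + \<phi> * frpow \<alpha> (ts_nu T t) * Lg)) * Lg)"
proof -
  note fder = assms(4)
  define r where "r = ts_rho T t"
  have tT: "t \<in> T" using assms(7) by (auto simp: ts_Tk_def split: if_splits)
  have below: "s \<le> r" if "s \<in> T" "s < t" for s
  proof -
    have ne: "{s\<in>T. s < t} \<noteq> {}" using that by auto
    have bdd: "bdd_above {s\<in>T. s < t}" by (rule bdd_aboveI[of _ t]) auto
    show ?thesis unfolding r_def ts_rho_def using ne cSup_upper[OF _ bdd, of s] that by auto
  qed
  have r_le: "r \<le> t"
  proof (cases "{s\<in>T. s < t} = {}")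
    case True then show ?thesis by (simp add: r_def ts_rho_def)
  next
    case False then show ?thesis unfolding r_def ts_rho_def
      by (auto intro!: cSup_least)
  qed
  define a where "a = g r"
  define N where "N b = (if b = a then f' a else (f b - f a) / (b - a))" for b
  have Nf: "f a - f b = N b * (a - b)" for b
    by (cases "b = a") (auto simp: N_def field_simps)
  have Ncont: "isCont N b0" for b0
  proof (cases "b0 = a")
    case True
    have "((\<lambda>y. (f y - f a) / (y - a)) \<longlongrightarrow> f' a) (at a)"
      using fder[of a] by (simp add: has_field_derivative_iff)
    then have "(N \<longlongrightarrow> f' a) (at a)"
      by (rule Lim_transform_eventually) (auto simp: N_def eventually_at_filter)
    then show ?thesis using True by (simp add: isCont_def N_def)
  next
    case False
    have ev: "eventually (\<lambda>b. N b = (f b - f a) / (b - a)) (nhds b0)"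
    proof -
      have "eventually (\<lambda>b. b \<noteq> a) (nhds b0)"
        using False by (intro t1_space_nhds) auto
      then show ?thesis by eventually_elim (auto simp: N_def)
    qed
    have fc: "isCont f b0" using fder DERIV_isCont by blast
    have "isCont (\<lambda>b. (f b - f a) / (b - a)) b0"
      using False fc by (auto intro!: continuous_intros)
    then show ?thesis using isCont_cong[OF ev] by simp
  qed
  have gcont: "continuous (at t within T) g" using assms(6,7) by blast
  have hcont: "continuous (at t within T) (\<lambda>s. N (g s))"
    by (rule continuous_within_compose3[OF Ncont gcont])
  define I where "I = integral {0..1} (\<lambda>\<phi>. f' (g r + \<phi> * frpow \<alpha> (ts_nu T t) * Lg))"
  have hyp: "\<forall>\<epsilon>>0. \<exists>\<delta>>0. \<forall>s \<in> (if \<alpha> \<in> Qodd then U_nbhd T \<delta> t else U_left T \<delta> t).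
        \<bar>(g r - g s) - Lg * frpow \<alpha> (r - s)\<bar> \<le> \<epsilon> * \<bar>r - s\<bar> powr \<alpha>"
    using assms(8) by (simp add: nabla_frac_has_deriv_def r_def)
  have key: "nabla_frac_has_deriv T \<alpha> (f \<circ> g) t (I * Lg)"
  proof (cases "\<alpha> \<notin> Qodd \<and> r < t")
    case True
    show ?thesis unfolding nabla_frac_has_deriv_def
    proof (intro conjI assms(7) allI impI)
      fix \<epsilon> :: real assume "\<epsilon> > 0"
      have "U_left T (t - r) t = {}" using below by (fastforce simp: U_left_def)
      then show "\<exists>\<delta>>0. \<forall>s\<in>(if \<alpha> \<in> Qodd then U_nbhd T \<delta> t else U_left T \<delta> t).
         \<bar>(f \<circ> g) (ts_rho T t) - (f \<circ> g) s - I * Lg * frpow \<alpha> (ts_rho T t - s)\<bar>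
         \<le> \<epsilon> * \<bar>ts_rho T t - s\<bar> powr \<alpha>"
        using True by (intro exI[of _ "t - r"]) auto
    qed
  next
    case False
    have IN: "I = N (g t)"
    proof (cases "r = t")
      case True
      then have "ts_nu T t = 0" by (simp add: ts_nu_def r_def)
      then show ?thesis using True by (simp add: I_def frpow_zero N_def a_def)
    next
      case rt: False
      with r_le False have Q: "\<alpha> \<in> Qodd" and rlt: "r < t" by auto
      have "\<bar>(g r - g t) - Lg * frpow \<alpha> (r - t)\<bar> \<le> 0"
      proof (rule le0_lemma)
        fix e :: real assume "e > 0"
        then obtain \<delta> where "\<delta> > 0" and h: "\<forall>s \<in> U_nbhd T \<delta> t.
          \<bar>(g r - g s) - Lg * frpow \<alpha> (r - s)\<bar> \<le> e * \<bar>r - s\<bar> powr \<alpha>"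
          using hyp Q by fastforce
        moreover have "t \<in> U_nbhd T \<delta> t" using tT \<open>\<delta> > 0\<close> by (simp add: U_nbhd_def)
        ultimately show "\<bar>(g r - g t) - Lg * frpow \<alpha> (r - t)\<bar> \<le> e * \<bar>r - t\<bar> powr \<alpha>" by blast
      qed simp
      moreover have "frpow \<alpha> (r - t) = - frpow \<alpha> (ts_nu T t)"
        using frpow_neg[OF Q, of "t - r"] by (simp add: ts_nu_def r_def)
      ultimately have "g r - g t + Lg * frpow \<alpha> (ts_nu T t) = 0" by simp
      then have gt: "g t = a + frpow \<alpha> (ts_nu T t) * Lg"
        using mult.commute[of Lg "frpow \<alpha> (ts_nu T t)"] unfolding a_def by linarith
      have "I = integral {0..1} (\<lambda>\<phi>. f' (a + \<phi> * (frpow \<alpha> (ts_nu T t) * Lg)))"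
        by (simp add: I_def a_def mult.assoc)
      also have "\<dots> = N (g t)" unfolding integral_lemma[OF fder] gt
        by (simp add: N_def)
      finally show ?thesis .
    qed
    show ?thesis unfolding nabla_frac_has_deriv_def r_def[symmetric]
    proof (intro conjI assms(7) allI impI)
      fix \<epsilon> :: real assume ep: "\<epsilon> > 0"
      define \<eta> where "\<eta> = \<epsilon> / (2 * (\<bar>Lg\<bar> + 1))"
      define \<epsilon>' where "\<epsilon>' = \<epsilon> / (2 * (\<bar>I\<bar> + 1))"
      have "\<eta> > 0" "\<epsilon>' > 0" using ep by (auto simp: \<eta>_def \<epsilon>'_def)
      obtain \<delta>1 where d1: "\<delta>1 > 0" and h1: "\<forall>s\<in>T. dist s t < \<delta>1 \<longrightarrow> dist (N (g s)) (N (g t)) < min \<eta> 1"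
        using hcont \<open>\<eta> > 0\<close> unfolding continuous_within_eps_delta
        by (metis min_less_iff_conj zero_less_one)
      obtain \<delta>2 where d2: "\<delta>2 > 0" and h2: "\<forall>s \<in> (if \<alpha> \<in> Qodd then U_nbhd T \<delta>2 t else U_left T \<delta>2 t).
        \<bar>(g r - g s) - Lg * frpow \<alpha> (r - s)\<bar> \<le> \<epsilon>' * \<bar>r - s\<bar> powr \<alpha>"
        using hyp \<open>\<epsilon>' > 0\<close> by blast
      show "\<exists>\<delta>>0. \<forall>s\<in>(if \<alpha> \<in> Qodd then U_nbhd T \<delta> t else U_left T \<delta> t).
         \<bar>(f \<circ> g) r - (f \<circ> g) s - I * Lg * frpow \<alpha> (r - s)\<bar> \<le> \<epsilon> * \<bar>r - s\<bar> powr \<alpha>"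
      proof (intro exI[of _ "min \<delta>1 \<delta>2"] conjI ballI)
        show "min \<delta>1 \<delta>2 > 0" using d1 d2 by simp
        fix s assume s: "s \<in> (if \<alpha> \<in> Qodd then U_nbhd T (min \<delta>1 \<delta>2) t else U_left T (min \<delta>1 \<delta>2) t)"
        have sT: "s \<in> T" and sd: "dist s t < \<delta>1" using s
          by (auto simp: U_nbhd_def U_left_def dist_real_def split: if_splits)
        have s2: "s \<in> (if \<alpha> \<in> Qodd then U_nbhd T \<delta>2 t else U_left T \<delta>2 t)" using s
          by (auto simp: U_nbhd_def U_left_def split: if_splits)
        have cond: "\<alpha> \<in> Qodd \<or> 0 \<le> r - s" using s below
          by (auto simp: U_left_def split: if_splits)
        define P where "P = frpow \<alpha> (r - s)"
        define E where "E = (g r - g s) - Lg * P"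
        define K where "K = \<bar>r - s\<bar> powr \<alpha>"
        have K0: "K \<ge> 0" by (simp add: K_def)
        have PK: "\<bar>P\<bar> = K" unfolding P_def K_def by (rule frpow_abs[OF cond])
        have EK: "\<bar>E\<bar> \<le> \<epsilon>' * K" using h2 s2 by (simp add: E_def P_def K_def)
        have Nd: "\<bar>N (g s) - I\<bar> < \<eta>" and Nd1: "\<bar>N (g s) - I\<bar> < 1"
          using h1 sT sd IN by (auto simp: dist_real_def)
        have NB: "\<bar>N (g s)\<bar> \<le> \<bar>I\<bar> + 1" using Nd1 by linarith
        have eq: "(f \<circ> g) r - (f \<circ> g) s - I * Lg * P = (N (g s) - I) * Lg * P + N (g s) * E"
          using Nf[of "g s"] by (simp add: a_def E_def algebra_simps)
        have t1: "\<bar>(N (g s) - I) * Lg * P\<bar> \<le> \<epsilon> / 2 * K"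
        proof -
          have "\<bar>(N (g s) - I) * Lg * P\<bar> = \<bar>N (g s) - I\<bar> * \<bar>Lg\<bar> * K" by (simp add: abs_mult PK)
          also have "\<dots> \<le> \<eta> * (\<bar>Lg\<bar> + 1) * K"
            using Nd K0 by (intro mult_right_mono) (auto intro!: mult_mono)
          also have "\<eta> * (\<bar>Lg\<bar> + 1) = \<epsilon> / 2" by (simp add: \<eta>_def field_simps)
          finally show ?thesis .
        qed
        have t2: "\<bar>N (g s) * E\<bar> \<le> \<epsilon> / 2 * K"
        proof -
          have "\<bar>N (g s) * E\<bar> = \<bar>N (g s)\<bar> * \<bar>E\<bar>" by (simp add: abs_mult)
          also have "\<dots> \<le> (\<bar>I\<bar> + 1) * (\<epsilon>' * K)"
            using NB EK by (intro mult_mono) auto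
          also have "(\<bar>I\<bar> + 1) * (\<epsilon>' * K) = \<epsilon> / 2 * K" by (simp add: \<epsilon>'_def field_simps)
          finally show ?thesis .
        qed
        have "\<bar>(f \<circ> g) r - (f \<circ> g) s - I * Lg * P\<bar> \<le> \<epsilon> * K"
          using t1 t2 unfolding eq by linarith
        then show "\<bar>(f \<circ> g) r - (f \<circ> g) s - I * Lg * frpow \<alpha> (r - s)\<bar> \<le> \<epsilon> * \<bar>r - s\<bar> powr \<alpha>"
          by (simp add: P_def K_def)
      qed
    qed
  qed
  then show ?thesis using nabla_frac_differentiable_def unfolding I_def r_def by auto
qed

end
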